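(* Let $M=\mathbb{R}/\mathbb{Z}$ with its standard flat metric, so that $\mathrm{Vol}(\mathbb{R}/\mathbb{Z})=1$. Let $X_1,\dots,X_N$ be $M$-valued random variables, each with distribution $\mu$, and $\mu_N=N^{-1}\sum_{n=1}^N\delta_{X_n}$. Assume $\mu\ge c\,\mathrm{Vol}$ and $\sum_{1\le m<n\le N}\alpha(X_m,X_n)\le BN$ with constants $c>0$, $B\ge0$. Then \[\sqrt{\mathbb{E}W_2^2(\mu_N,\mu)}\le\sqrt{\frac{2+16B}{3cN}}.\]
   Context: $W_2$ is the quadratic Wasserstein metric with respect to the geodesic (circle) distance $\rho$: $W_2(\mu,\nu)=\inf_\pi\left(\int\rho(x,y)^2\,\mathrm{d}\pi(x,y)\right)^{1/2}$ over couplings $\pi$ of $\mu,\nu$. $\alpha(X,Y)=\sup_{A,B}|\Pr(X\in A,Y\in B)-\Pr(X\in A)\Pr(Y\in B)|$ over Borel sets $A,B$. $\mu\ge c\,\mathrm{Vol}$ means $\mu(A)\ge c\,\mathrm{Vol}(A)$ for all Borel $A$. *)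

theory Defs
  imports "HOL-Probability.Probability"
begin

text \<open>The circle M = R/Z is represented by the fundamental domain [0,1) of the reals.
  Geodesic (circle) distance on [0,1):\<close>
definition circ_dist :: "real \<Rightarrow> real \<Rightarrow> real" where
  "circ_dist x y = min \<bar>x - y\<bar> (1 - \<bar>x - y\<bar>)"

definition coupling :: "(real \<times> real) measure \<Rightarrow> real measure \<Rightarrow> real measure \<Rightarrow> bool" where
  "coupling \<pi> \<mu> \<nu> \<longleftrightarrow> prob_space \<pi> \<and> sets \<pi> = sets (borel \<Otimes>\<^sub>M borel)
     \<and> distr \<pi> borel fst = \<mu> \<and> distr \<pi> borel snd = \<nu>"

definition W2 :: "real measure \<Rightarrow> real measure \<Rightarrow> real" where
  "W2 \<mu> \<nu> = sqrt (Inf {(\<integral>z. (circ_dist (fst z) (snd z))\<^sup>2 \<partial>\<pi>) | \<pi>. coupling \<pi> \<mu> \<nu>})"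

text \<open>Empirical measure (1/N) \<Sum>_{n=1}^N \<delta>_{x n}, as a Borel measure.\<close>
definition empirical_measure :: "nat \<Rightarrow> (nat \<Rightarrow> real) \<Rightarrow> real measure" where
  "empirical_measure N x = distr (measure_pmf (pmf_of_set {1..N})) borel x"

definition alpha_mix :: "'a measure \<Rightarrow> ('a \<Rightarrow> real) \<Rightarrow> ('a \<Rightarrow> real) \<Rightarrow> real" where
  "alpha_mix M X Y = (SUP A\<in>sets borel. SUP B\<in>sets borel.
     \<bar>measure M {\<omega>\<in>space M. X \<omega> \<in> A \<and> Y \<omega> \<in> B}
       - measure M {\<omega>\<in>space M. X \<omega> \<in> A} * measure M {\<omega>\<in>space M. Y \<omega> \<in> B}\<bar>)"

end

theory Submission
  imports Defs
begin

definition qf :: "real measure \<Rightarrow> real \<Rightarrow> real" where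
  "qf P t = (if t \<in> {0<..<1} then Inf {x. t \<le> cdf P x} else 0)"

lemma qf_pseudo:
  assumes "real_distribution P" "t \<in> {0<..<1}"
  shows "t \<le> cdf P x \<longleftrightarrow> qf P t \<le> x"
proof -
  interpret cdf_distribution P by (simp add: assms(1) cdf_distribution.intro)
  show ?thesis using pseudoinverse[of t x] assms(2) by (simp add: qf_def)
qed

lemma qf_measurable[measurable]:
  assumes "real_distribution P"
  shows "qf P \<in> borel_measurable borel"
proof -
  interpret cdf_distribution P by (simp add: assms(1) cdf_distribution.intro)
  have "(\<lambda>t. if t \<in> {0<..<1} then Inf {x. t \<le> cdf P x} else 0) \<in> borel_measurable borel"
    using measurable_CI by (subst (asm) measurable_restrict_space_iff) auto
  then show ?thesis unfolding qf_def[abs_def] .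
qed

lemma qf_range:
  assumes "real_distribution P" "t \<in> {0<..<1}"
    and P0: "\<And>x. x < 0 \<Longrightarrow> cdf P x = 0" and P1: "cdf P 1 = 1"
  shows "0 \<le> qf P t" "qf P t \<le> 1"
proof -
  show "qf P t \<le> 1" using qf_pseudo[OF assms(1,2), of 1] P1 assms(2) by simp
  show "0 \<le> qf P t"
  proof (rule ccontr)
    assume "\<not> 0 \<le> qf P t"
    then have "t \<le> cdf P (qf P t)" using qf_pseudo[OF assms(1,2), of "qf P t"] by simp
    with P0 \<open>\<not> 0 \<le> qf P t\<close> assms(2) show False by simp
  qed
qed

lemma pointwise_real:
  assumes P: "real_distribution P" and Q: "real_distribution Q" and c: "c > 0"
  and growth: "\<And>x y. 0 \<le> x \<Longrightarrow> x \<le> y \<Longrightarrow> y \<le> 1 \<Longrightarrow> c*(y-x) \<le> cdf Q y - cdf Q x"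
  and t: "t \<in> {0<..<1}" and x: "0 \<le> x" "x \<le> 1"
  and a0: "0 \<le> qf P t" and a1: "qf P t \<le> 1" and b0: "0 \<le> qf Q t" and b1: "qf Q t \<le> 1"
  and btw: "min (qf P t) (qf Q t) \<le> x" "x \<le> max (qf P t) (qf Q t)" "x \<noteq> qf P t" "x \<noteq> qf Q t"
  shows "2*\<bar>x - qf Q t\<bar> \<le> 2/c*\<bar>cdf P x - cdf Q x\<bar> \<and> min (cdf P x) (cdf Q x) < t \<and> t \<le> max (cdf P x) (cdf Q x)"
proof -
  define a where "a = qf P t"
  define b where "b = qf Q t"
  note pP = qf_pseudo[OF P t] and pQ = qf_pseudo[OF Q t]
  show ?thesis
  proof (cases "x < b")
    case True
    then have ax: "a < x" using btw unfolding a_def[symmetric] b_def[symmetric] by auto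
    have tP: "t \<le> cdf P x" using pP[of x] ax a_def by simp
    have tQ: "cdf Q x < t" using pQ[of x] True b_def by simp
    have key: "c*(b-x) \<le> t - cdf Q x"
    proof (rule ccontr)
      assume "\<not> c*(b-x) \<le> t - cdf Q x"
      define \<delta> where "\<delta> = c*(b-x) - (t - cdf Q x)"
      have d0: "\<delta> > 0" using \<open>\<not> c*(b-x) \<le> t - cdf Q x\<close> \<delta>_def by simp
      define y where "y = b - \<delta>/(2*c)"
      have "\<delta> < c*(b-x)" using tQ \<delta>_def by simp
      moreover have "c*(b-x) > 0" using True c by simp
      ultimately have h: "\<delta> < (b-x)*(2*c)" by (simp add: algebra_simps)
      have "\<delta>/(2*c) < b - x" using pos_divide_less_eq[of "2*c" \<delta> "b-x"] h c by simp
      then have yx: "x \<le> y" using y_def by simp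
      have yb: "y < b" using y_def d0 c by simp
      have "cdf Q y < t" using pQ[of y] yb b_def by simp
      moreover have "c*(y-x) \<le> cdf Q y - cdf Q x" using growth[of x y] x yx yb b1 b_def by simp
      moreover have "c*(y-x) = c*(b-x) - \<delta>/2" using y_def c by (simp add: field_simps)
      ultimately show False using \<delta>_def d0 by simp
    qed
    have "2*\<bar>x - b\<bar> = 2*(b-x)" using True by simp
    also have "\<dots> \<le> 2/c*(t - cdf Q x)" using key c by (simp add: field_simps)
    also have "\<dots> \<le> 2/c*\<bar>cdf P x - cdf Q x\<bar>" using tP c by (intro mult_left_mono) auto
    finally show ?thesis using tP tQ b_def by auto
  next
    case False
    then have bx: "b < x" using btw b_def by auto
    then have xa: "x < a" using btw a_def b_def by auto
    have tP: "cdf P x < t" using pP[of x] xa a_def by simp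
    have tQ: "t \<le> cdf Q x" using pQ[of x] bx b_def by simp
    have tb: "t \<le> cdf Q b" using pQ[of b] b_def by simp
    have "c*(x-b) \<le> cdf Q x - cdf Q b" using growth[of b x] b0 bx x b_def by simp
    then have key: "c*(x-b) \<le> cdf Q x - t" using tb by simp
    have "2*\<bar>x - b\<bar> = 2*(x-b)" using bx by simp
    also have "\<dots> \<le> 2/c*(cdf Q x - t)" using key c by (simp add: field_simps)
    also have "\<dots> \<le> 2/c*\<bar>cdf P x - cdf Q x\<bar>" using tP c by (intro mult_left_mono) auto
    finally show ?thesis using tP tQ b_def by auto
  qed
qed

lemma tri_integral:
  fixes a b :: real
  shows "(\<integral>\<^sup>+x. ennreal (2*\<bar>x-b\<bar>) * indicator {min a b..max a b} x \<partial>lborel) = ennreal ((a-b)^2)"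
proof (cases "a \<le> b")
  case True
  have "(\<integral>\<^sup>+x. ennreal (2*\<bar>x-b\<bar>) * indicator {a..b} x \<partial>lborel) = (\<lambda>x::real. 0 - (b-x)^2) b - (\<lambda>x::real. 0 - (b-x)^2) a"
  proof (rule nn_integral_FTC_Icc)
    fix x assume x: "x \<in> {a..b}"
    show "((\<lambda>x::real. 0 - (b-x)^2) has_real_derivative 2*\<bar>x-b\<bar>) (at x)"
      using x by (auto intro!: derivative_eq_intros simp: abs_if)
  qed (use True in auto)
  then show ?thesis using True by (simp add: power2_commute)
next
  case False
  have "(\<integral>\<^sup>+x. ennreal (2*\<bar>x-b\<bar>) * indicator {b..a} x \<partial>lborel) = (\<lambda>x. (x-b)^2) a - (\<lambda>x. (x-b)^2) b"
  proof (rule nn_integral_FTC_Icc)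
    fix x assume x: "x \<in> {b..a}"
    show "((\<lambda>x. (x-b)^2) has_real_derivative 2*\<bar>x-b\<bar>) (at x)"
      using x by (auto intro!: derivative_eq_intros simp: abs_if)
  qed (use False in auto)
  then show ?thesis using False by simp
qed

lemma quantile_bound:
  assumes P: "real_distribution P" and Q: "real_distribution Q" and c: "c > 0"
  and P0: "\<And>x. x < 0 \<Longrightarrow> cdf P x = 0" and P1: "cdf P 1 = 1"
  and Q0: "\<And>x. x < 0 \<Longrightarrow> cdf Q x = 0" and Q1: "cdf Q 1 = 1"
  and growth: "\<And>x y. 0 \<le> x \<Longrightarrow> x \<le> y \<Longrightarrow> y \<le> 1 \<Longrightarrow> c*(y-x) \<le> cdf Q y - cdf Q x"
  shows "(\<integral>\<^sup>+t. ennreal ((qf P t - qf Q t)^2) * indicator {0<..<1} t \<partial>lborel)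
     \<le> (\<integral>\<^sup>+x. ennreal (2/c * (cdf P x - cdf Q x)^2) * indicator {0..1} x \<partial>lborel)"
proof -
  note [measurable] = qf_measurable[OF P] qf_measurable[OF Q]
  define H where "H t x = (if t \<in> {0<..<1} \<and> 0 \<le> x \<and> x \<le> 1 \<and> min (qf P t) (qf Q t) \<le> x
      \<and> x \<le> max (qf P t) (qf Q t) \<and> x \<noteq> qf P t then ennreal (2*\<bar>x - qf Q t\<bar>) else 0)" for t x
  have meas: "case_prod H \<in> borel_measurable (lborel \<Otimes>\<^sub>M lborel)"
    unfolding H_def by measurable
  have A: "(\<integral>\<^sup>+x. H t x \<partial>lborel) = ennreal ((qf P t - qf Q t)^2)" if t: "t \<in> {0<..<1}" for t
  proof -
    have r: "0 \<le> qf P t" "qf P t \<le> 1" "0 \<le> qf Q t" "qf Q t \<le> 1"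
      using qf_range[OF P t P0 P1] qf_range[OF Q t Q0 Q1] by auto
    have "(\<integral>\<^sup>+x. H t x \<partial>lborel) = (\<integral>\<^sup>+x. ennreal (2*\<bar>x-qf Q t\<bar>) * indicator {min (qf P t) (qf Q t)..max (qf P t) (qf Q t)} x \<partial>lborel)"
    proof (rule nn_integral_cong_AE)
      show "AE x in lborel. H t x = ennreal (2*\<bar>x-qf Q t\<bar>) * indicator {min (qf P t) (qf Q t)..max (qf P t) (qf Q t)} x"
        using AE_lborel_singleton[of "qf P t"]
        by eventually_elim (use t r in \<open>auto simp: H_def indicator_def\<close>)
    qed
    also have "\<dots> = ennreal ((qf P t - qf Q t)^2)" by (rule tri_integral)
    finally show ?thesis .
  qed
  have B: "H t x \<le> ennreal (2/c*\<bar>cdf P x - cdf Q x\<bar>) * indicator {0..1} x *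
      indicator {min (cdf P x) (cdf Q x)<..max (cdf P x) (cdf Q x)} t" for t x
  proof (cases "t \<in> {0<..<1} \<and> 0 \<le> x \<and> x \<le> 1 \<and> min (qf P t) (qf Q t) \<le> x
      \<and> x \<le> max (qf P t) (qf Q t) \<and> x \<noteq> qf P t \<and> x \<noteq> qf Q t")
    case True
    then have t: "t \<in> {0<..<1}" by simp
    have r: "0 \<le> qf P t" "qf P t \<le> 1" "0 \<le> qf Q t" "qf Q t \<le> 1"
      using qf_range[OF P t P0 P1] qf_range[OF Q t Q0 Q1] by auto
    have "2*\<bar>x - qf Q t\<bar> \<le> 2/c*\<bar>cdf P x - cdf Q x\<bar> \<and> min (cdf P x) (cdf Q x) < t \<and> t \<le> max (cdf P x) (cdf Q x)"
      using True r by (intro pointwise_real[OF P Q c growth]) auto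
    then show ?thesis using True by (auto simp: H_def indicator_def intro!: ennreal_leI)
  next
    case False
    then have "H t x = 0" by (auto simp: H_def)
    then show ?thesis by simp
  qed
  have "(\<integral>\<^sup>+t. ennreal ((qf P t - qf Q t)^2) * indicator {0<..<1} t \<partial>lborel)
      = (\<integral>\<^sup>+t. (\<integral>\<^sup>+x. H t x \<partial>lborel) \<partial>lborel)"
  proof (rule nn_integral_cong)
    fix t
    show "ennreal ((qf P t - qf Q t)^2) * indicator {0<..<1} t = (\<integral>\<^sup>+x. H t x \<partial>lborel)"
    proof (cases "t \<in> {0<..<1}")
      case True then show ?thesis using A[OF True] by simp
    next
      case False then have "\<And>x. H t x = 0" by (auto simp add: H_def)
      then show ?thesis using False by simp
    qed
  qed
  also have "\<dots> = (\<integral>\<^sup>+x. (\<integral>\<^sup>+t. H t x \<partial>lborel) \<partial>lborel)"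
    by (rule lborel_pair.Fubini'[symmetric, OF meas])
  also have "\<dots> \<le> (\<integral>\<^sup>+x. (\<integral>\<^sup>+t. ennreal (2/c*\<bar>cdf P x - cdf Q x\<bar>) * indicator {0..1} x *
      indicator {min (cdf P x) (cdf Q x)<..max (cdf P x) (cdf Q x)} t \<partial>lborel) \<partial>lborel)"
    by (intro nn_integral_mono B)
  also have "\<dots> = (\<integral>\<^sup>+x. ennreal (2/c * (cdf P x - cdf Q x)^2) * indicator {0..1} x \<partial>lborel)"
  proof (rule nn_integral_cong)
    fix x
    have "(\<integral>\<^sup>+t. ennreal (2/c*\<bar>cdf P x - cdf Q x\<bar>) * indicator {0..1} x *
      indicator {min (cdf P x) (cdf Q x)<..max (cdf P x) (cdf Q x)} t \<partial>lborel)
      = ennreal (2/c*\<bar>cdf P x - cdf Q x\<bar>) * indicator {0..1} x * ennreal (\<bar>cdf P x - cdf Q x\<bar>)"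
      by (subst nn_integral_cmult_indicator) (auto simp: abs_if min_def max_def)
    also have "\<dots> = ennreal (2/c * (cdf P x - cdf Q x)^2) * indicator {0..1} x"
      using c by (auto simp: indicator_def ennreal_mult'[symmetric] power2_eq_square abs_mult_self_eq)
    finally show "(\<integral>\<^sup>+t. ennreal (2/c*\<bar>cdf P x - cdf Q x\<bar>) * indicator {0..1} x *
      indicator {min (cdf P x) (cdf Q x)<..max (cdf P x) (cdf Q x)} t \<partial>lborel)
      = ennreal (2/c * (cdf P x - cdf Q x)^2) * indicator {0..1} x" .
  qed
  finally show ?thesis .
qed

lemma circ_dist_sq_le: "(circ_dist x y)^2 \<le> (x - y)^2"
  unfolding circ_dist_def by (auto simp: min_def abs_le_square_iff[symmetric] abs_if)

lemma circ_dist_measurable[measurable]: "(\<lambda>z. circ_dist (fst z) (snd z)) \<in> borel_measurable (borel \<Otimes>\<^sub>M borel)"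
  unfolding circ_dist_def by measurable

lemma W2_bound:
  assumes P: "real_distribution P" and Q: "real_distribution Q"
  shows "ennreal ((W2 P Q)^2) \<le> (\<integral>\<^sup>+t. ennreal ((qf P t - qf Q t)^2) * indicator {0<..<1} t \<partial>lborel)"
proof -
  define \<Omega> where "\<Omega> = restrict_space lborel {0<..<1::real}"
  interpret \<Omega>: prob_space \<Omega>
    unfolding \<Omega>_def by (auto simp add: emeasure_restrict_space space_restrict_space intro!: prob_spaceI)
  have sp: "space \<Omega> = {0<..<1}" unfolding \<Omega>_def by (simp add: space_restrict_space)
  have mP[measurable]: "qf P \<in> borel_measurable \<Omega>" and mQ[measurable]: "qf Q \<in> borel_measurable \<Omega>"
    unfolding \<Omega>_def using qf_measurable[OF P] qf_measurable[OF Q]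
    by (auto intro: measurable_restrict_space1)
  have dP: "distr \<Omega> borel (qf P) = P"
  proof -
    interpret cdf_distribution P by (simp add: P cdf_distribution.intro)
    have "distr \<Omega> borel (qf P) = distr \<Omega> borel I"
      by (rule distr_cong) (auto simp: sp qf_def)
    then show ?thesis using distr_I_eq_M \<Omega>_def by simp
  qed
  have dQ: "distr \<Omega> borel (qf Q) = Q"
  proof -
    interpret cdf_distribution Q by (simp add: Q cdf_distribution.intro)
    have "distr \<Omega> borel (qf Q) = distr \<Omega> borel I"
      by (rule distr_cong) (auto simp: sp qf_def)
    then show ?thesis using distr_I_eq_M \<Omega>_def by simp
  qed
  define \<pi> where "\<pi> = distr \<Omega> (borel \<Otimes>\<^sub>M borel) (\<lambda>t. (qf P t, qf Q t))"
  have mpair[measurable]: "(\<lambda>t. (qf P t, qf Q t)) \<in> measurable \<Omega> (borel \<Otimes>\<^sub>M borel)" by measurable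
  have cpl: "coupling \<pi> P Q"
    unfolding coupling_def
  proof (intro conjI)
    show "prob_space \<pi>" unfolding \<pi>_def by (rule \<Omega>.prob_space_distr[OF mpair])
    show "sets \<pi> = sets (borel \<Otimes>\<^sub>M borel)" unfolding \<pi>_def by simp
    show "distr \<pi> borel fst = P" unfolding \<pi>_def
      by (subst distr_distr) (auto simp: comp_def dP)
    show "distr \<pi> borel snd = Q" unfolding \<pi>_def
      by (subst distr_distr) (auto simp: comp_def dQ)
  qed
  define S where "S = {(\<integral>z. (circ_dist (fst z) (snd z))\<^sup>2 \<partial>\<pi>') | \<pi>'. coupling \<pi>' P Q}"
  have S0: "\<And>s. s \<in> S \<Longrightarrow> 0 \<le> s" unfolding S_def by auto
  have inS: "(\<integral>z. (circ_dist (fst z) (snd z))\<^sup>2 \<partial>\<pi>) \<in> S" using cpl S_def by auto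
  have InfS: "0 \<le> Inf S" using inS S0 by (intro cInf_greatest) auto
  have W2eq: "(W2 P Q)^2 = Inf S" unfolding W2_def S_def[symmetric] using InfS by simp
  have le1: "Inf S \<le> (\<integral>z. (circ_dist (fst z) (snd z))\<^sup>2 \<partial>\<pi>)"
    using inS S0 by (intro cInf_lower) (auto intro!: bdd_belowI[of S 0])
  have int_eq: "(\<integral>z. (circ_dist (fst z) (snd z))\<^sup>2 \<partial>\<pi>) = (\<integral>t. (circ_dist (qf P t) (qf Q t))\<^sup>2 \<partial>\<Omega>)"
    unfolding \<pi>_def by (subst integral_distr) auto
  define R where "R = (\<integral>\<^sup>+t. ennreal ((qf P t - qf Q t)^2) * indicator {0<..<1} t \<partial>lborel)"
  have nnR: "(\<integral>\<^sup>+t. ennreal ((circ_dist (qf P t) (qf Q t))\<^sup>2) \<partial>\<Omega>) \<le> R"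
  proof -
    have "(\<integral>\<^sup>+t. ennreal ((circ_dist (qf P t) (qf Q t))\<^sup>2) \<partial>\<Omega>) \<le> (\<integral>\<^sup>+t. ennreal ((qf P t - qf Q t)^2) \<partial>\<Omega>)"
      by (intro nn_integral_mono ennreal_leI circ_dist_sq_le)
    also have "\<dots> = R" unfolding R_def \<Omega>_def by (subst nn_integral_restrict_space) auto
    finally show ?thesis .
  qed
  show ?thesis
  proof (cases "R = \<infinity>")
    case True then show ?thesis unfolding R_def by simp
  next
    case False
    then have "R = ennreal (enn2real R)" by (simp add: less_top)
    then have "(\<integral>t. (circ_dist (qf P t) (qf Q t))\<^sup>2 \<partial>\<Omega>) \<le> enn2real R"
      using nnR by (intro integral_real_bounded) auto
    then have "(W2 P Q)^2 \<le> enn2real R" using W2eq le1 int_eq by simp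
    then have E: "ennreal ((W2 P Q)^2) \<le> ennreal (enn2real R)" by (rule ennreal_leI)
    have "ennreal ((W2 P Q)^2) \<le> R" by (subst \<open>R = ennreal (enn2real R)\<close>) (rule E)
    then show ?thesis unfolding R_def .
  qed
qed

lemma EZZ:
  fixes Xm Xn :: "'a \<Rightarrow> real" and x p :: real
  assumes M: "prob_space M" and [measurable]: "Xm \<in> borel_measurable M" "Xn \<in> borel_measurable M"
  and pm: "measure M {\<omega>\<in>space M. Xm \<omega> \<le> x} = p" and pn: "measure M {\<omega>\<in>space M. Xn \<omega> \<le> x} = p"
  shows "(\<integral>\<omega>. ((if Xm \<omega> \<le> x then 1 else 0) - p) * ((if Xn \<omega> \<le> x then 1 else 0) - p) \<partial>M)
     = measure M {\<omega>\<in>space M. Xm \<omega> \<le> x \<and> Xn \<omega> \<le> x} - p*p"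
proof -
  define A where "A = {\<omega>\<in>space M. Xm \<omega> \<le> x \<and> Xn \<omega> \<le> x}"
  define Am where "Am = {\<omega>\<in>space M. Xm \<omega> \<le> x}"
  define An where "An = {\<omega>\<in>space M. Xn \<omega> \<le> x}"
  have sets[measurable]: "A \<in> sets M" "Am \<in> sets M" "An \<in> sets M" unfolding A_def Am_def An_def by measurable
  interpret prob_space M by (rule M)
  have "(\<integral>\<omega>. ((if Xm \<omega> \<le> x then 1 else 0) - p) * ((if Xn \<omega> \<le> x then 1 else 0) - p) \<partial>M)
      = (\<integral>\<omega>. indicator A \<omega> - p * indicator Am \<omega> - p * indicator An \<omega> + p * p \<partial>M)"
    by (rule Bochner_Integration.integral_cong[OF refl]) (auto simp: A_def Am_def An_def indicator_def algebra_simps)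
  also have "\<dots> = measure M A - p * measure M Am - p * measure M An + p*p"
    using sets by (simp add: prob_space emeasure_space_1 less_top[symmetric])
  finally show ?thesis using pm pn A_def Am_def An_def by (simp add: algebra_simps)
qed

lemma sq_sum:
  fixes z :: "nat \<Rightarrow> real"
  shows "(\<Sum>n\<in>{1..N}. z n)^2 = (\<Sum>n\<in>{1..N}. (z n)^2) + 2*(\<Sum>m\<in>{1..N}. \<Sum>n\<in>{m<..N}. z m * z n)"
proof (induction N)
  case 0 then show ?case by simp
next
  case (Suc N)
  have e1: "{1..Suc N} = insert (Suc N) {1..N}" by auto
  have e2: "\<And>m. m \<in> {1..N} \<Longrightarrow> {m<..Suc N} = insert (Suc N) {m<..N}" by auto
  have "(\<Sum>m\<in>{1..Suc N}. \<Sum>n\<in>{m<..Suc N}. z m * z n) = (\<Sum>m\<in>{1..N}. \<Sum>n\<in>{m<..Suc N}. z m * z n)"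
    by (simp add: e1)
  also have "\<dots> = (\<Sum>m\<in>{1..N}. z m * z (Suc N) + (\<Sum>n\<in>{m<..N}. z m * z n))"
    by (rule sum.cong[OF refl]) (simp add: e2)
  also have "\<dots> = (\<Sum>m\<in>{1..N}. z m) * z (Suc N) + (\<Sum>m\<in>{1..N}. \<Sum>n\<in>{m<..N}. z m * z n)"
    by (simp add: sum.distrib sum_distrib_right)
  finally have h: "(\<Sum>m\<in>{1..Suc N}. \<Sum>n\<in>{m<..Suc N}. z m * z n) = (\<Sum>m\<in>{1..N}. z m) * z (Suc N) + (\<Sum>m\<in>{1..N}. \<Sum>n\<in>{m<..N}. z m * z n)" .
  show ?case unfolding h using Suc.IH by (simp add: e1 power2_eq_square algebra_simps)
qed

lemma alpha_ge:
  fixes Xm Xn :: "'a \<Rightarrow> real"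
  assumes M: "prob_space M"
  shows "measure M {\<omega>\<in>space M. Xm \<omega> \<le> x \<and> Xn \<omega> \<le> x} - measure M {\<omega>\<in>space M. Xm \<omega> \<le> x} * measure M {\<omega>\<in>space M. Xn \<omega> \<le> x}
     \<le> alpha_mix M Xm Xn"
proof -
  interpret prob_space M by (rule M)
  define g where "g A B = \<bar>measure M {\<omega>\<in>space M. Xm \<omega> \<in> A \<and> Xn \<omega> \<in> B}
       - measure M {\<omega>\<in>space M. Xm \<omega> \<in> A} * measure M {\<omega>\<in>space M. Xn \<omega> \<in> B}\<bar>" for A B
  have g1: "g A B \<le> 1" for A B
  proof -
    have "measure M {\<omega>\<in>space M. Xm \<omega> \<in> A} * measure M {\<omega>\<in>space M. Xn \<omega> \<in> B} \<le> 1"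
      by (intro mult_le_one) auto
    moreover have "0 \<le> measure M {\<omega>\<in>space M. Xm \<omega> \<in> A} * measure M {\<omega>\<in>space M. Xn \<omega> \<in> B}" by simp
    moreover have "measure M {\<omega>\<in>space M. Xm \<omega> \<in> A \<and> Xn \<omega> \<in> B} \<le> 1" by simp
    moreover have "0 \<le> measure M {\<omega>\<in>space M. Xm \<omega> \<in> A \<and> Xn \<omega> \<in> B}" by simp
    ultimately show ?thesis unfolding g_def by linarith
  qed
  have bi: "bdd_above (g A ` sets borel)" for A by (intro bdd_aboveI2[of _ _ 1] g1)
  have inner: "(SUP B\<in>sets borel. g A B) \<le> 1" for A by (intro cSUP_least g1) auto
  have bo: "bdd_above ((\<lambda>A. SUP B\<in>sets borel. g A B) ` sets borel)"
    by (intro bdd_aboveI2[of _ _ 1] inner)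
  have "measure M {\<omega>\<in>space M. Xm \<omega> \<le> x \<and> Xn \<omega> \<le> x} - measure M {\<omega>\<in>space M. Xm \<omega> \<le> x} * measure M {\<omega>\<in>space M. Xn \<omega> \<le> x}
      \<le> g {..x} {..x}" unfolding g_def by simp
  also have "\<dots> \<le> (SUP B\<in>sets borel. g {..x} B)" by (intro cSUP_upper bi) auto
  also have "\<dots> \<le> (SUP A\<in>sets borel. SUP B\<in>sets borel. g A B)"
    by (intro cSUP_upper bo) auto
  finally show ?thesis unfolding alpha_mix_def g_def .
qed

lemma var_bound:
  fixes X :: "nat \<Rightarrow> 'a \<Rightarrow> real" and x p :: real
  assumes M: "prob_space M" and N1: "N \<ge> 1" and mX: "\<And>n. n \<in> {1..N} \<Longrightarrow> X n \<in> borel_measurable M"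
    and pX: "\<And>n. n \<in> {1..N} \<Longrightarrow> measure M {\<omega>\<in>space M. X n \<omega> \<le> x} = p"
  shows "integrable M (\<lambda>\<omega>. (\<Sum>n\<in>{1..N}. (if X n \<omega> \<le> x then 1 else 0) - p)^2)"
    "(\<integral>\<omega>. (\<Sum>n\<in>{1..N}. (if X n \<omega> \<le> x then 1 else 0) - p)^2 \<partial>M)
      \<le> real N / 4 + 2*(\<Sum>m\<in>{1..N}. \<Sum>n\<in>{m<..N}. alpha_mix M (X m) (X n))"
proof -
  interpret prob_space M by (rule M)
  define Z where "Z n \<omega> = (if X n \<omega> \<le> x then 1 else 0) - p" for n \<omega>
  have p01: "0 \<le> p" "p \<le> 1" using pX[of 1] N1 by (metis atLeastAtMost_iff le_refl measure_nonneg, metis atLeastAtMost_iff le_refl prob_le_1)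
  have mZ: "Z n \<in> borel_measurable M" if "n \<in> {1..N}" for n
    using mX[OF that] unfolding Z_def by measurable
  have bZ: "\<bar>Z n \<omega>\<bar> \<le> 1" for n \<omega> using p01 by (auto simp: Z_def)
  have iZZ: "integrable M (\<lambda>\<omega>. Z m \<omega> * Z n \<omega>)" if "m \<in> {1..N}" "n \<in> {1..N}" for m n
  proof (rule integrable_const_bound[where B=1])
    show "AE \<omega> in M. norm (Z m \<omega> * Z n \<omega>) \<le> 1"
      using bZ by (auto simp: abs_mult intro!: mult_le_one)
    show "(\<lambda>\<omega>. Z m \<omega> * Z n \<omega>) \<in> borel_measurable M" using mZ that by measurable
  qed
  have EZZ': "(\<integral>\<omega>. Z m \<omega> * Z n \<omega> \<partial>M) = measure M {\<omega>\<in>space M. X m \<omega> \<le> x \<and> X n \<omega> \<le> x} - p*p"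
    if "m \<in> {1..N}" "n \<in> {1..N}" for m n
    unfolding Z_def by (rule EZZ[OF M mX[OF that(1)] mX[OF that(2)] pX[OF that(1)] pX[OF that(2)]])
  have diag: "(\<integral>\<omega>. (Z n \<omega>)^2 \<partial>M) \<le> 1/4" if "n \<in> {1..N}" for n
  proof -
    have "(\<integral>\<omega>. (Z n \<omega>)^2 \<partial>M) = p - p*p"
      using EZZ'[OF that that] pX[OF that] by (simp add: power2_eq_square)
    also have "\<dots> \<le> 1/4" using zero_le_power2[of "p - 1/2"] by (simp add: power2_eq_square algebra_simps)
    finally show ?thesis .
  qed
  have off: "(\<integral>\<omega>. Z m \<omega> * Z n \<omega> \<partial>M) \<le> alpha_mix M (X m) (X n)" if "m \<in> {1..N}" "n \<in> {1..N}" for m n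
    using EZZ'[OF that] alpha_ge[OF M, of "X m" x "X n"] pX[OF that(1)] pX[OF that(2)] by simp
  have eq: "(\<lambda>\<omega>. (\<Sum>n\<in>{1..N}. (if X n \<omega> \<le> x then 1 else 0) - p)^2)
     = (\<lambda>\<omega>. (\<Sum>n\<in>{1..N}. (Z n \<omega>)^2) + 2*(\<Sum>m\<in>{1..N}. \<Sum>n\<in>{m<..N}. Z m \<omega> * Z n \<omega>))"
    unfolding Z_def[symmetric] by (rule ext) (rule sq_sum)
  have i1: "integrable M (\<lambda>\<omega>. (\<Sum>n\<in>{1..N}. (Z n \<omega>)^2))"
    using iZZ by (auto simp: power2_eq_square)
  have i2: "integrable M (\<lambda>\<omega>. (\<Sum>m\<in>{1..N}. \<Sum>n\<in>{m<..N}. Z m \<omega> * Z n \<omega>))"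
    using iZZ by (intro Bochner_Integration.integrable_sum) auto
  show "integrable M (\<lambda>\<omega>. (\<Sum>n\<in>{1..N}. (if X n \<omega> \<le> x then 1 else 0) - p)^2)"
    unfolding eq using i1 i2 by auto
  have nest: "(\<integral>\<omega>. (\<Sum>m\<in>{1..N}. \<Sum>n\<in>{m<..N}. Z m \<omega> * Z n \<omega>) \<partial>M)
      = (\<Sum>m\<in>{1..N}. \<Sum>n\<in>{m<..N}. (\<integral>\<omega>. Z m \<omega> * Z n \<omega> \<partial>M))"
  proof -
    have "(\<integral>\<omega>. (\<Sum>m\<in>{1..N}. \<Sum>n\<in>{m<..N}. Z m \<omega> * Z n \<omega>) \<partial>M)
      = (\<Sum>m\<in>{1..N}. (\<integral>\<omega>. (\<Sum>n\<in>{m<..N}. Z m \<omega> * Z n \<omega>) \<partial>M))"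
      using iZZ by (intro Bochner_Integration.integral_sum Bochner_Integration.integrable_sum) auto
    also have "\<dots> = (\<Sum>m\<in>{1..N}. \<Sum>n\<in>{m<..N}. (\<integral>\<omega>. Z m \<omega> * Z n \<omega> \<partial>M))"
      using iZZ by (intro sum.cong refl Bochner_Integration.integral_sum) auto
    finally show ?thesis .
  qed
  have "(\<integral>\<omega>. (\<Sum>n\<in>{1..N}. (if X n \<omega> \<le> x then 1 else 0) - p)^2 \<partial>M)
     = (\<Sum>n\<in>{1..N}. (\<integral>\<omega>. (Z n \<omega>)^2 \<partial>M)) + 2*(\<Sum>m\<in>{1..N}. \<Sum>n\<in>{m<..N}. (\<integral>\<omega>. Z m \<omega> * Z n \<omega> \<partial>M))"
    unfolding eq using iZZ i1 i2
    using iZZ i1 i2 apply (subst Bochner_Integration.integral_add)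
      apply (auto simp del: atLeastAtMost_iff)[2]
    apply (subst integral_mult_right_zero)
    apply (subst nest)
    apply (subst Bochner_Integration.integral_sum)
    by (auto simp: power2_eq_square)
  also have "\<dots> \<le> (\<Sum>n\<in>{1..N}. 1/4) + 2*(\<Sum>m\<in>{1..N}. \<Sum>n\<in>{m<..N}. alpha_mix M (X m) (X n))"
    by (intro add_mono mult_left_mono sum_mono diag off) auto
  also have "\<dots> = real N / 4 + 2*(\<Sum>m\<in>{1..N}. \<Sum>n\<in>{m<..N}. alpha_mix M (X m) (X n))" by simp
  finally show "(\<integral>\<omega>. (\<Sum>n\<in>{1..N}. (if X n \<omega> \<le> x then 1 else 0) - p)^2 \<partial>M)
      \<le> real N / 4 + 2*(\<Sum>m\<in>{1..N}. \<Sum>n\<in>{m<..N}. alpha_mix M (X m) (X n))" .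
qed

lemma emp_rd: "N \<ge> 1 \<Longrightarrow> real_distribution (empirical_measure N xs)"
  unfolding empirical_measure_def
  by (intro prob_space.real_distribution_distr prob_space_measure_pmf) auto

lemma emp_cdf:
  assumes "N \<ge> 1"
  shows "cdf (empirical_measure N xs) x = (\<Sum>n\<in>{1..N}. if xs n \<le> x then 1 else 0) / real N"
proof -
  have ne: "{1..N} \<noteq> {}" using assms by auto
  have "cdf (empirical_measure N xs) x = measure (measure_pmf (pmf_of_set {1..N})) (xs -` {..x})"
    unfolding cdf_def empirical_measure_def by (subst measure_distr) auto
  also have "\<dots> = card ({1..N} \<inter> xs -` {..x}) / card {1..N}"
    using ne by (subst measure_pmf_of_set) auto
  also have "real (card ({1..N} \<inter> xs -` {..x})) = (\<Sum>n\<in>{1..N}. if xs n \<le> x then 1 else 0)"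
  proof -
    have "{1..N} \<inter> xs -` {..x} = {n\<in>{1..N}. xs n \<le> x}" by auto
    then show ?thesis by (simp add: sum.inter_filter[symmetric])
  qed
  finally show ?thesis by simp
qed

theorem theorem3:
  fixes M :: "'a measure" and X :: "nat \<Rightarrow> 'a \<Rightarrow> real" and \<mu> :: "real measure"
    and N :: nat and c B :: real
  assumes "prob_space M"
    and "N \<ge> 1"
    and "\<And>n. n \<in> {1..N} \<Longrightarrow> X n \<in> borel_measurable M"
    and "\<And>n \<omega>. n \<in> {1..N} \<Longrightarrow> \<omega> \<in> space M \<Longrightarrow> X n \<omega> \<in> {0..<1}"
    and "\<And>n. n \<in> {1..N} \<Longrightarrow> distr M borel (X n) = \<mu>"
    and "c > 0" and "B \<ge> 0"
    and "\<And>A. A \<in> sets borel \<Longrightarrow> A \<subseteq> {0..<1} \<Longrightarrow> c * measure lborel A \<le> measure \<mu> A"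
    and "(\<Sum>m\<in>{1..N}. \<Sum>n\<in>{m<..N}. alpha_mix M (X m) (X n)) \<le> B * real N"
  shows "(\<integral>\<^sup>+ \<omega>. ennreal ((W2 (empirical_measure N (\<lambda>n. X n \<omega>)) \<mu>)\<^sup>2) \<partial>M)
           \<le> ennreal ((2 + 16 * B) / (3 * c * real N))"
proof -
  note M = assms(1) and N1 = assms(2) and mX = assms(3) and rX = assms(4) and dX = assms(5)
    and c = assms(6) and B = assms(7) and low = assms(8) and alph = assms(9)
  interpret prob_space M by (rule M)
  have one: "1 \<in> {1..N}" using N1 by simp
  have rdmu: "real_distribution \<mu>" using dX[OF one] mX[OF one] by (metis real_distribution_distr)
  interpret mu: real_distribution \<mu> by (rule rdmu)
  have cdfmu: "cdf \<mu> x = measure M {\<omega>\<in>space M. X n \<omega> \<le> x}" if "n \<in> {1..N}" for n x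
  proof -
    have "cdf \<mu> x = measure (distr M borel (X n)) {..x}" using dX[OF that] by (simp add: cdf_def)
    also have "\<dots> = measure M (X n -` {..x} \<inter> space M)" using mX[OF that] by (subst measure_distr) auto
    finally show ?thesis by (simp add: Int_def conj_commute vimage_def)
  qed
  have Q0: "cdf \<mu> x = 0" if "x < 0" for x
  proof -
    have "{\<omega>\<in>space M. X 1 \<omega> \<le> x} = {}" using rX[OF one] that by force
    then show ?thesis using cdfmu[OF one, of x] by (metis measure_empty)
  qed
  have Q1: "cdf \<mu> 1 = 1"
  proof -
    have "{\<omega>\<in>space M. X 1 \<omega> \<le> 1} = space M" using rX[OF one] by force
    then show ?thesis using cdfmu[OF one] by (simp add: prob_space)
  qed
  have growth: "c*(y-x) \<le> cdf \<mu> y - cdf \<mu> x" if "0 \<le> x" "x \<le> y" "y \<le> 1" for x y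
  proof (cases "x = y")
    case True then show ?thesis by simp
  next
    case False
    then have xy: "x < y" using that by simp
    have "c*(y-x) = c * measure lborel {x<..<y}" using xy by simp
    also have "\<dots> \<le> measure \<mu> {x<..<y}" using that by (intro low) auto
    also have "\<dots> \<le> measure \<mu> {x<..y}" by (intro mu.finite_measure_mono) auto
    also have "\<dots> = cdf \<mu> y - cdf \<mu> x" using mu.cdf_diff_eq[OF xy] by simp
    finally show ?thesis .
  qed
  define f where "f \<omega> x = ennreal (2/c * ((\<Sum>n\<in>{1..N}. (if X n \<omega> \<le> x then 1 else 0) - cdf \<mu> x)^2 / (real N)^2))
      * indicator {0..1} x" for \<omega> x
  have pw: "ennreal ((W2 (empirical_measure N (\<lambda>n. X n \<omega>)) \<mu>)\<^sup>2) \<le> (\<integral>\<^sup>+x. f \<omega> x \<partial>lborel)"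
    if \<omega>: "\<omega> \<in> space M" for \<omega>
  proof -
    define P where "P = empirical_measure N (\<lambda>n. X n \<omega>)"
    have rdP: "real_distribution P" unfolding P_def by (rule emp_rd[OF N1])
    have cP: "cdf P x = (\<Sum>n\<in>{1..N}. if X n \<omega> \<le> x then 1 else 0) / real N" for x
      unfolding P_def by (rule emp_cdf[OF N1])
    have P0: "cdf P x = 0" if "x < 0" for x
      unfolding cP using rX[OF _ \<omega>] that by (auto intro!: sum.neutral) (metis atLeastAtMost_iff le_less_trans linorder_not_less)
    have P1: "cdf P 1 = 1"
      unfolding cP using rX[OF _ \<omega>] N1 by (auto simp: less_imp_le)
    have "ennreal ((W2 P \<mu>)\<^sup>2) \<le> (\<integral>\<^sup>+t. ennreal ((qf P t - qf \<mu> t)^2) * indicator {0<..<1} t \<partial>lborel)"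
      by (rule W2_bound[OF rdP rdmu])
    also have "\<dots> \<le> (\<integral>\<^sup>+x. ennreal (2/c * (cdf P x - cdf \<mu> x)^2) * indicator {0..1} x \<partial>lborel)"
      by (rule quantile_bound[OF rdP rdmu c P0 P1 Q0 Q1 growth]) auto
    also have "\<dots> = (\<integral>\<^sup>+x. f \<omega> x \<partial>lborel)"
    proof (rule nn_integral_cong)
      fix x
      have "cdf P x - cdf \<mu> x = (\<Sum>n\<in>{1..N}. (if X n \<omega> \<le> x then 1 else 0) - cdf \<mu> x) / real N"
        unfolding cP using N1 by (simp add: sum_subtractf field_simps)
      then show "ennreal (2/c * (cdf P x - cdf \<mu> x)^2) * indicator {0..1} x = f \<omega> x"
        unfolding f_def by (simp add: power_divide)
    qed
    finally show ?thesis unfolding P_def .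
  qed
  have [measurable]: "cdf \<mu> \<in> borel_measurable borel"
    by (intro borel_measurable_mono monoI mu.cdf_nondecreasing)
  note [measurable] = mX
  have mf: "case_prod f \<in> borel_measurable (M \<Otimes>\<^sub>M lborel)"
    unfolding f_def by measurable
  interpret pair_sigma_finite M "lborel :: real measure"
    by (simp add: pair_sigma_finite_def prob_space_imp_sigma_finite M lborel.sigma_finite_measure_axioms)
  define V where "V = 2/c * ((1/4 + 2*B) / real N)"
  have px: "(\<integral>\<^sup>+\<omega>. f \<omega> x \<partial>M) \<le> ennreal V * indicator {0..1} x" for x
  proof (cases "x \<in> {0..1}")
    case False then show ?thesis by (simp add: f_def)
  next
    case True
    define S where "S \<omega> = (\<Sum>n\<in>{1..N}. (if X n \<omega> \<le> x then 1 else 0) - cdf \<mu> x)" for \<omega>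
    have pX: "measure M {\<omega>\<in>space M. X n \<omega> \<le> x} = cdf \<mu> x" if "n \<in> {1..N}" for n
      using cdfmu[OF that] by simp
    have vb: "integrable M (\<lambda>\<omega>. (\<Sum>n\<in>{1..N}. (if X n \<omega> \<le> x then 1 else 0) - cdf \<mu> x)^2)"
      "(\<integral>\<omega>. (\<Sum>n\<in>{1..N}. (if X n \<omega> \<le> x then 1 else 0) - cdf \<mu> x)^2 \<partial>M)
      \<le> real N / 4 + 2*(\<Sum>m\<in>{1..N}. \<Sum>n\<in>{m<..N}. alpha_mix M (X m) (X n))"
      using var_bound[OF M N1, of X x "cdf \<mu> x"] mX pX by blast+
    have int: "integrable M (\<lambda>\<omega>. 2/c * ((S \<omega>)^2 / (real N)^2))"
      using vb(1) unfolding S_def by auto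
    have rb: "(\<integral>\<omega>. 2/c * ((S \<omega>)^2 / (real N)^2) \<partial>M) \<le> V"
    proof -
      have "(\<integral>\<omega>. 2/c * ((S \<omega>)^2 / (real N)^2) \<partial>M) = 2/c / (real N)^2 * (\<integral>\<omega>. (S \<omega>)^2 \<partial>M)"
        by simp
      also have "\<dots> \<le> 2/c / (real N)^2 * (real N / 4 + 2 * (B * real N))"
      proof (intro mult_left_mono)
        show "(\<integral>\<omega>. (S \<omega>)^2 \<partial>M) \<le> real N / 4 + 2 * (B * real N)"
          using vb(2) alph unfolding S_def by linarith
      qed (use c in auto)
      also have "\<dots> = V" unfolding V_def using N1 c by (simp add: field_simps power2_eq_square)
      finally show ?thesis .
    qed
    have "(\<integral>\<^sup>+\<omega>. f \<omega> x \<partial>M) = (\<integral>\<^sup>+\<omega>. ennreal (2/c * ((S \<omega>)^2 / (real N)^2)) \<partial>M)"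
      using True by (simp add: f_def S_def)
    also have "\<dots> = ennreal (\<integral>\<omega>. 2/c * ((S \<omega>)^2 / (real N)^2) \<partial>M)"
      using int c by (intro nn_integral_eq_integral) auto
    also have "\<dots> \<le> ennreal V" using rb by (rule ennreal_leI)
    finally show ?thesis using True by simp
  qed
  have "(\<integral>\<^sup>+ \<omega>. ennreal ((W2 (empirical_measure N (\<lambda>n. X n \<omega>)) \<mu>)\<^sup>2) \<partial>M)
      \<le> (\<integral>\<^sup>+\<omega>. (\<integral>\<^sup>+x. f \<omega> x \<partial>lborel) \<partial>M)"
    by (intro nn_integral_mono pw)
  also have "\<dots> = (\<integral>\<^sup>+x. (\<integral>\<^sup>+\<omega>. f \<omega> x \<partial>M) \<partial>lborel)"
    by (rule Fubini'[OF mf, symmetric])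
  also have "\<dots> \<le> (\<integral>\<^sup>+x. ennreal V * indicator {0..1::real} x \<partial>lborel)"
    by (rule nn_integral_mono) (rule px)
  also have "\<dots> = ennreal V" by (subst nn_integral_cmult_indicator) auto
  also have "\<dots> \<le> ennreal ((2 + 16 * B) / (3 * c * real N))"
  proof (intro ennreal_leI)
    have "V = (1 + 8*B) / (2 * c * real N)" unfolding V_def using N1 c by (simp add: field_simps)
    also have "\<dots> \<le> (2 + 16 * B) / (3 * c * real N)"
      using N1 c B by (simp add: field_simps)
    finally show "V \<le> (2 + 16 * B) / (3 * c * real N)" .
  qed
  finally show ?thesis .
qed

end
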